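(* Let $R$ be a semiprime ring, $I$ an ideal of $R$, and $c\in I$ an element that is regular in $I$ (i.e. for $s\in I$, $sc=0$ implies $s=0$ and $cs=0$ implies $s=0$). Let $M=\mathrm{ann}_R(I)$. Then (1) $\mathrm{l.ann}_R(c)=\mathrm{r.ann}_R(c)=M$, and (2) $\eta(c)$ is regular (neither a left nor a right zero divisor) in the factor ring $R/M$, where $\eta\colon R\to R/M$ is the canonical epimorphism.
   Context: For $A\subseteq R$: $\mathrm{l.ann}_R(A)=\{r\in R\mid rA=0\}$, $\mathrm{r.ann}_R(A)=\{r\in R\mid Ar=0\}$, $\mathrm{ann}_R(A)=\{r\in R\mid rA=Ar=0\}$. *)

theory Defs
  imports Main
begin

text \<open>Rings are associative, not necessarily unital: Isabelle's type class ring.\<close>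

definition is_ideal :: "'a::ring set \<Rightarrow> bool" where
  "is_ideal I \<longleftrightarrow> 0 \<in> I \<and> (\<forall>x\<in>I. \<forall>y\<in>I. x + y \<in> I) \<and> (\<forall>x\<in>I. - x \<in> I)
     \<and> (\<forall>r x. x \<in> I \<longrightarrow> r * x \<in> I \<and> x * r \<in> I)"

text \<open>Semiprime: no nonzero ideal with zero square (equivalently no nonzero nilpotent ideal).
  For an ideal I, I^2 = 0 iff all products of two elements of I vanish.\<close>
definition semiprime :: "('a::ring) itself \<Rightarrow> bool" where
  "semiprime _ \<longleftrightarrow> (\<forall>I::'a set. is_ideal I \<and> (\<forall>x\<in>I. \<forall>y\<in>I. x * y = 0) \<longrightarrow> I = {0})"

definition l_ann :: "'a::ring set \<Rightarrow> 'a set" where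
  "l_ann A = {r. \<forall>a\<in>A. r * a = 0}"

definition r_ann :: "'a::ring set \<Rightarrow> 'a set" where
  "r_ann A = {r. \<forall>a\<in>A. a * r = 0}"

definition ann :: "'a::ring set \<Rightarrow> 'a set" where
  "ann A = {r. \<forall>a\<in>A. r * a = 0 \<and> a * r = 0}"

text \<open>Factor ring R/M: elements are the cosets x + M; canonical epimorphism eta.\<close>
definition eta :: "'a::ring set \<Rightarrow> 'a \<Rightarrow> 'a set" where
  "eta M x = {x + m | m. m \<in> M}"

definition quot_carrier :: "'a::ring set \<Rightarrow> 'a set set" where
  "quot_carrier M = range (eta M)"

text \<open>Product of cosets X, Y (for an ideal M this is the coset of xy).\<close>
definition quot_mult :: "'a::ring set \<Rightarrow> 'a set \<Rightarrow> 'a set \<Rightarrow> 'a set" where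
  "quot_mult M X Y = {x * y + m | x y m. x \<in> X \<and> y \<in> Y \<and> m \<in> M}"

definition quot_regular :: "'a::ring set \<Rightarrow> 'a set \<Rightarrow> bool" where
  "quot_regular M A \<longleftrightarrow>
     (\<forall>X\<in>quot_carrier M. quot_mult M A X = eta M 0 \<longrightarrow> X = eta M 0) \<and>
     (\<forall>X\<in>quot_carrier M. quot_mult M X A = eta M 0 \<longrightarrow> X = eta M 0)"

end

theory Submission
  imports Defs
begin

lemma sp_r:
  fixes I :: "'a::ring set"
  assumes sp: "semiprime TYPE('a)" and id: "is_ideal I" and x: "x \<in> I"
    and h: "\<forall>s\<in>I. s * x = 0"
  shows "x = 0"
proof -
  let ?J = "{x \<in> I. \<forall>s\<in>I. s * x = 0}"
  have "is_ideal ?J"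
    using id unfolding is_ideal_def
    by (auto simp: distrib_left mult.assoc[symmetric])
  moreover have "\<forall>x\<in>?J. \<forall>y\<in>?J. x * y = 0" by auto
  ultimately have "?J = {0}" using sp unfolding semiprime_def by blast
  thus ?thesis using x h by blast
qed

lemma sp_l:
  fixes I :: "'a::ring set"
  assumes sp: "semiprime TYPE('a)" and id: "is_ideal I" and x: "x \<in> I"
    and h: "\<forall>s\<in>I. x * s = 0"
  shows "x = 0"
proof -
  let ?J = "{x \<in> I. \<forall>s\<in>I. x * s = 0}"
  have "is_ideal ?J"
    using id unfolding is_ideal_def
    by (auto simp: distrib_right mult.assoc)
  moreover have "\<forall>x\<in>?J. \<forall>y\<in>?J. x * y = 0" by auto
  ultimately have "?J = {0}" using sp unfolding semiprime_def by blast
  thus ?thesis using x h by blast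
qed

theorem lemma1:
  fixes I :: "'a::ring set" and c :: 'a and M :: "'a set"
  assumes "semiprime TYPE('a)"
    and "is_ideal I"
    and "c \<in> I"
    and "\<forall>s\<in>I. s * c = 0 \<longrightarrow> s = 0"
    and "\<forall>s\<in>I. c * s = 0 \<longrightarrow> s = 0"
    and "M = ann I"
  shows "l_ann {c} = M \<and> r_ann {c} = M \<and> quot_regular M (eta M c)"
proof -
  note sp = assms(1) and id = assms(2)
  have cl: "\<And>r x. x \<in> I \<Longrightarrow> r * x \<in> I \<and> x * r \<in> I" using id unfolding is_ideal_def by blast
  have A: "x \<in> M" if "x * c = 0" for x
  proof -
    have 1: "s * x = 0" if "s \<in> I" for s
      using assms(4) cl[OF that, of x] \<open>x * c = 0\<close> by (metis mult.assoc mult_zero_right)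
    have "x * s = 0" if "s \<in> I" for s
      by (rule sp_r[OF sp id]) (use cl[OF that, of x] 1 in \<open>auto simp: mult.assoc[symmetric]\<close>)
    thus ?thesis using 1 assms(6) unfolding ann_def by auto
  qed
  have B: "x \<in> M" if "c * x = 0" for x
  proof -
    have 1: "x * s = 0" if "s \<in> I" for s
      using assms(5) cl[OF that, of x] \<open>c * x = 0\<close> by (metis mult.assoc mult_zero_left)
    have "s * x = 0" if "s \<in> I" for s
      by (rule sp_l[OF sp id]) (use cl[OF that, of x] 1 in \<open>auto simp: mult.assoc\<close>)
    thus ?thesis using 1 assms(6) unfolding ann_def by auto
  qed
  have Mc: "x * c = 0 \<and> c * x = 0" if "x \<in> M" for x
    using that assms(3,6) unfolding ann_def by auto
  have M0: "0 \<in> M" using assms(6) unfolding ann_def by auto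
  have Mg: "eta M y = eta M 0" if "y \<in> M" for y
  proof -
    have "eta M y = M"
    proof
      show "eta M y \<subseteq> M" using that assms(6) unfolding eta_def ann_def
        by (auto simp: distrib_left distrib_right)
      show "M \<subseteq> eta M y"
      proof
        fix z assume "z \<in> M"
        hence "z - y \<in> M" using that assms(6) unfolding ann_def
          by (auto simp: left_diff_distrib right_diff_distrib)
        thus "z \<in> eta M y" unfolding eta_def by (auto intro: exI[of _ "z - y"])
      qed
    qed
    moreover have "eta M 0 = M" unfolding eta_def by auto
    ultimately show ?thesis by simp
  qed
  have "l_ann {c} = M" using A Mc unfolding l_ann_def by auto
  moreover have "r_ann {c} = M" using B Mc unfolding r_ann_def by auto
  moreover have "quot_regular M (eta M c)"
    unfolding quot_regular_def quot_carrier_def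
  proof (intro conjI ballI impI)
    fix X assume "X \<in> range (eta M)" and e: "quot_mult M (eta M c) X = eta M 0"
    then obtain y where X: "X = eta M y" by auto
    have "c * y + 0 \<in> quot_mult M (eta M c) X"
      unfolding quot_mult_def X eta_def using M0 by fastforce
    hence "c * y \<in> M" using e unfolding eta_def by auto
    hence "c * (y * s) = 0" if "s \<in> I" for s
      using that assms(6) unfolding ann_def by (auto simp: mult.assoc[symmetric])
    hence "y * s = 0" if "s \<in> I" for s using that assms(5) cl by blast
    hence "y * c = 0" using assms(3) by blast
    thus "X = eta M 0" using A Mg X by blast
  next
    fix X assume "X \<in> range (eta M)" and e: "quot_mult M X (eta M c) = eta M 0"
    then obtain y where X: "X = eta M y" by auto
    have "y * c + 0 \<in> quot_mult M X (eta M c)"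
      unfolding quot_mult_def X eta_def using M0 by fastforce
    hence "y * c \<in> M" using e unfolding eta_def by auto
    hence "(s * y) * c = 0" if "s \<in> I" for s
      using that assms(6) unfolding ann_def by (auto simp: mult.assoc)
    hence "s * y = 0" if "s \<in> I" for s using that assms(4) cl by blast
    hence "c * y = 0" using assms(3) by blast
    thus "X = eta M 0" using B Mg X by blast
  qed
  ultimately show ?thesis by blast
qed

end
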